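(* For $\lambda\in\mathfrak a^*_{\mathbb C}$ (as meromorphic functions), $$b(\lambda)=C_b\prod_{\beta\in\Sigma_*^+}\frac{\cos\big(\pi(\lambda_\beta-\frac{m_{\beta/2}}4)\big)}{\cos(\pi\lambda_\beta)\sin(\pi\lambda_\beta)}\prod_{\beta\in\Sigma_*^+\setminus\{\beta_1,\dots,\beta_l\}}\sin\big(\pi(\lambda_\beta-\tilde\rho_\beta)\big),$$ where $C_b=2^{-l}\,\tilde c^*(-\rho)/\tilde c(\rho)$.
   Context: Setting. $\mathfrak a$ is an $l$-dimensional real Euclidean space with inner product extended $\mathbb C$-bilinearly. $\Sigma\subset\mathfrak a^*$ is a (possibly non-reduced) root system with Weyl group $W$. $m:\Sigma\to\,]0,\infty[$ is $W$-invariant, $m_\alpha=m(\alpha)$, and $m_\alpha=0$ for $\alpha\notin\Sigma$. Fix positive roots $\Sigma^+$ with simple roots $\alpha_1,\dots,\alpha_l$, and let $\Sigma_*^+=\{\beta\in\Sigma^+:2\beta\notin\Sigma\}$. Set $\lambda_\alpha=\langle\lambda,\alpha\rangle/\langle\alpha,\alpha\rangle$ and $\rho=\frac12\sum_{\alpha\in\Sigma^+}m_\alpha\alpha$. Let $\beta_j=\alpha_j$ if $2\alpha_j\notin\Sigma$ and $\beta_j=2\alpha_j$ otherwise. Set $\lambda_j=\lambda_{\beta_j}$, $\rho_j=\frac12(m_{\beta_j}+m_{\beta_j/2}/2)$, and $\tilde\rho_\beta=\frac12(m_\beta+m_{\beta/2}/2)$ for $\beta\in\Sigma_*^+$. $c$-functions.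 For $\alpha\in\Sigma^+$, $$c_\alpha(\lambda)=\frac{\Gamma(\lambda_\alpha+m_{\alpha/2}/4)}{\Gamma(\lambda_\alpha+m_{\alpha/2}/4+m_\alpha/2)},\qquad c^*_\alpha(\lambda)=\frac{\Gamma(1-\lambda_\alpha-m_{\alpha/2}/4-m_\alpha/2)}{\Gamma(1-\lambda_\alpha-m_{\alpha/2}/4)}.$$ Set $\tilde c=\prod c_\alpha$, $\tilde c^*=\prod c^*_\alpha$, $c=\tilde c/\tilde c(\rho)$, $c^*=\tilde c^*/\tilde c^*(-\rho)$. Then $$b(\lambda):=2^{-l}\frac{c(-\lambda)}{c^*(-\lambda)}\prod_{j=1}^l\frac1{\sin(\pi(\lambda_j-\rho_j))}.$$ *)

theory Defs
  imports "HOL-Analysis.Analysis"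
begin

text \<open>The real space \<open>\<a>\<^sup>*\<close> is modelled by a Euclidean space type 'a (with its
 inner product). An element \<open>\<lambda>\<close> of the complexification is a pair (x, y),
 meaning \<open>\<lambda> = x + i y\<close>.\<close>

definition refl_root :: "'a::euclidean_space \<Rightarrow> 'a \<Rightarrow> 'a" where
  "refl_root \<alpha> v = v - (2 * (v \<bullet> \<alpha>) / (\<alpha> \<bullet> \<alpha>)) *\<^sub>R \<alpha>"

definition root_system :: "'a::euclidean_space set \<Rightarrow> bool" where
  "root_system R \<longleftrightarrow> finite R \<and> 0 \<notin> R \<and> span R = UNIV \<and>
     (\<forall>\<alpha>\<in>R. \<forall>\<beta>\<in>R. refl_root \<alpha> \<beta> \<in> R) \<and>
     (\<forall>\<alpha>\<in>R. \<forall>\<beta>\<in>R. 2 * (\<beta> \<bullet> \<alpha>) / (\<alpha> \<bullet> \<alpha>) \<in> \<int>)"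

definition positive_system :: "'a::euclidean_space set \<Rightarrow> 'a set \<Rightarrow> 'a set \<Rightarrow> bool" where
  "positive_system R P S \<longleftrightarrow> S \<subseteq> P \<and> P \<subseteq> R \<and> R = P \<union> uminus ` P \<and>
     P \<inter> uminus ` P = {} \<and> independent S \<and>
     (\<forall>\<beta>\<in>P. \<exists>k::'a \<Rightarrow> nat. \<beta> = (\<Sum>s\<in>S. real (k s) *\<^sub>R s))"

text \<open>W-invariant positive multiplicity, extended by 0 outside R
 (invariance under all root reflections, which generate W).\<close>
definition multiplicity :: "'a::euclidean_space set \<Rightarrow> ('a \<Rightarrow> real) \<Rightarrow> bool" where
  "multiplicity R m \<longleftrightarrow> (\<forall>\<alpha>\<in>R. m \<alpha> > 0) \<and> (\<forall>\<alpha>. \<alpha> \<notin> R \<longrightarrow> m \<alpha> = 0) \<and>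
     (\<forall>\<alpha>\<in>R. \<forall>\<beta>\<in>R. m (refl_root \<alpha> \<beta>) = m \<beta>)"

definition lcoord :: "'a::euclidean_space \<times> 'a \<Rightarrow> 'a \<Rightarrow> complex" where
  "lcoord lam \<alpha> = Complex (fst lam \<bullet> \<alpha>) (snd lam \<bullet> \<alpha>) / complex_of_real (\<alpha> \<bullet> \<alpha>)"

definition rho :: "'a::euclidean_space set \<Rightarrow> ('a \<Rightarrow> real) \<Rightarrow> 'a" where
  "rho P m = (1/2) *\<^sub>R (\<Sum>\<alpha>\<in>P. m \<alpha> *\<^sub>R \<alpha>)"

definition half :: "'a::euclidean_space \<Rightarrow> 'a" where
  "half \<alpha> = (1/2) *\<^sub>R \<alpha>"

definition c_alpha :: "('a::euclidean_space \<Rightarrow> real) \<Rightarrow> 'a \<Rightarrow> 'a \<times> 'a \<Rightarrow> complex" where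
  "c_alpha m \<alpha> lam =
     Gamma (lcoord lam \<alpha> + of_real (m (half \<alpha>) / 4)) /
     Gamma (lcoord lam \<alpha> + of_real (m (half \<alpha>) / 4) + of_real (m \<alpha> / 2))"

definition cstar_alpha :: "('a::euclidean_space \<Rightarrow> real) \<Rightarrow> 'a \<Rightarrow> 'a \<times> 'a \<Rightarrow> complex" where
  "cstar_alpha m \<alpha> lam =
     Gamma (1 - lcoord lam \<alpha> - of_real (m (half \<alpha>) / 4) - of_real (m \<alpha> / 2)) /
     Gamma (1 - lcoord lam \<alpha> - of_real (m (half \<alpha>) / 4))"

definition c_tilde :: "'a::euclidean_space set \<Rightarrow> ('a \<Rightarrow> real) \<Rightarrow> 'a \<times> 'a \<Rightarrow> complex" where
  "c_tilde P m lam = (\<Prod>\<alpha>\<in>P. c_alpha m \<alpha> lam)"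

definition cstar_tilde :: "'a::euclidean_space set \<Rightarrow> ('a \<Rightarrow> real) \<Rightarrow> 'a \<times> 'a \<Rightarrow> complex" where
  "cstar_tilde P m lam = (\<Prod>\<alpha>\<in>P. cstar_alpha m \<alpha> lam)"

definition c_fun :: "'a::euclidean_space set \<Rightarrow> ('a \<Rightarrow> real) \<Rightarrow> 'a \<times> 'a \<Rightarrow> complex" where
  "c_fun P m lam = c_tilde P m lam / c_tilde P m (rho P m, 0)"

definition cstar_fun :: "'a::euclidean_space set \<Rightarrow> ('a \<Rightarrow> real) \<Rightarrow> 'a \<times> 'a \<Rightarrow> complex" where
  "cstar_fun P m lam = cstar_tilde P m lam / cstar_tilde P m (- rho P m, 0)"

definition beta_of :: "'a::euclidean_space set \<Rightarrow> 'a \<Rightarrow> 'a" where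
  "beta_of R \<alpha> = (if 2 *\<^sub>R \<alpha> \<in> R then 2 *\<^sub>R \<alpha> else \<alpha>)"

definition rho_tilde :: "('a::euclidean_space \<Rightarrow> real) \<Rightarrow> 'a \<Rightarrow> real" where
  "rho_tilde m \<beta> = (m \<beta> + m (half \<beta>) / 2) / 2"

definition pos_star :: "'a::euclidean_space set \<Rightarrow> 'a set \<Rightarrow> 'a set" where
  "pos_star R P = {\<beta>\<in>P. 2 *\<^sub>R \<beta> \<notin> R}"

definition b_fun :: "'a::euclidean_space set \<Rightarrow> 'a set \<Rightarrow> 'a set \<Rightarrow> ('a \<Rightarrow> real) \<Rightarrow> 'a \<times> 'a \<Rightarrow> complex" where
  "b_fun R P S m lam =
     (1 / 2 ^ DIM('a)) * c_fun P m (- lam) / cstar_fun P m (- lam) *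
     (\<Prod>s\<in>S. 1 / sin (of_real pi * (lcoord lam (beta_of R s) - of_real (rho_tilde m (beta_of R s)))))"

end

theory Submission
  imports Defs
begin

lemma sin_pi_nz: fixes w :: complex assumes "Im w \<noteq> 0" shows "sin (of_real pi * w) \<noteq> 0"
proof
  assume "sin (of_real pi * w) = 0"
  then obtain n::int where "of_real pi * w = of_real (n*pi)" by (auto simp: sin_eq_0)
  then have "Im (of_real pi * w) = 0" by (metis Im_complex_of_real)
  with assms show False by simp
qed

lemma cos_pi_nz: fixes w :: complex assumes "Im w \<noteq> 0" shows "cos (of_real pi * w) \<noteq> 0"
proof
  assume "cos (of_real pi * w) = 0"
  then obtain n::int where "of_real pi * w = of_real (n*pi) + of_real pi / 2" by (auto simp: cos_eq_0)
  then have "Im (of_real pi * w) = Im (of_real (n*pi) + of_real pi / 2)" by simp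
  with assms show False by simp
qed

lemma gamma_ratio:
  fixes z :: complex and b :: real
  assumes "Im z \<noteq> 0"
  shows "(Gamma z / Gamma (z + of_real b)) / (Gamma (1 - z - of_real b) / Gamma (1 - z))
     = sin (of_real pi * (z + of_real b)) / sin (of_real pi * z)"
proof -
  have nI: "\<And>w::complex. Im w \<noteq> 0 \<Longrightarrow> w \<notin> \<int>\<^sub>\<le>\<^sub>0"
    by (auto elim!: nonpos_Ints_cases)
  have i1: "Im (z + of_real b) \<noteq> 0" "Im (1 - z) \<noteq> 0" "Im (1 - z - of_real b) \<noteq> 0" using assms by auto
  have r1: "Gamma z * Gamma (1 - z) = of_real pi / sin (of_real pi * z)" by (rule Gamma_reflection_complex)
  have r2: "Gamma (z + of_real b) * Gamma (1 - (z + of_real b)) = of_real pi / sin (of_real pi * (z + of_real b))"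
    by (rule Gamma_reflection_complex)
  have "1 - (z + of_real b) = 1 - z - of_real b" by simp
  note r2 = r2[unfolded this]
  have g: "Gamma z \<noteq> 0" "Gamma (z + of_real b) \<noteq> 0" "Gamma (1 - z) \<noteq> 0" "Gamma (1 - z - of_real b) \<noteq> 0"
    using nI assms i1 by (auto intro!: Gamma_nonzero)
  have s: "sin (of_real pi * z) \<noteq> 0" "sin (of_real pi * (z + of_real b)) \<noteq> 0"
    using sin_pi_nz assms i1 by auto
  have "(Gamma z / Gamma (z + of_real b)) / (Gamma (1 - z - of_real b) / Gamma (1 - z))
      = (Gamma z * Gamma (1 - z)) / (Gamma (z + of_real b) * Gamma (1 - z - of_real b))"
    using g by (simp add: field_simps)
  also have "\<dots> = sin (of_real pi * (z + of_real b)) / sin (of_real pi * z)"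
    unfolding r1 r2 using s by (simp add: field_simps)
  finally show ?thesis .
qed

lemma lcoord_scale: "c \<noteq> 0 \<Longrightarrow> lcoord lam (c *\<^sub>R a) = lcoord lam a / of_real c"
  unfolding lcoord_def by (simp add: complex_eq_iff field_simps power2_eq_square)

lemma lcoord_neg: "lcoord (- lam) a = - lcoord lam a"
  unfolding lcoord_def by (simp add: complex_eq_iff field_simps)

lemma Im_lcoord: "Im (lcoord lam a) = (snd lam \<bullet> a) / (a \<bullet> a)"
  unfolding lcoord_def by (simp add: Im_divide_of_real)


lemma T1: fixes L :: complex and b :: real assumes "Im L \<noteq> 0"
  shows "sin (of_real pi * (- L + of_real (0/4) + of_real b)) / sin (of_real pi * (- L + of_real (0/4)))
    = cos (of_real pi * (L - of_real (0/4))) / (cos (of_real pi * L) * sin (of_real pi * L)) *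
      sin (of_real pi * (L - of_real b))"
proof -
  have c: "cos (of_real pi * L) \<noteq> 0" and s: "sin (of_real pi * L) \<noteq> 0"
    using assms cos_pi_nz sin_pi_nz by auto
  have e1: "of_real pi * (- L + of_real (0/4) + of_real b) = - (of_real pi * (L - of_real b))"
    by (simp add: algebra_simps)
  have e2: "of_real pi * (- L + of_real (0/4)) = - (of_real pi * L)" by simp
  have e3: "of_real pi * (L - of_real (0/4)) = of_real pi * L" by simp
  show ?thesis unfolding e1 e2 e3 sin_minus using c s by (simp add: field_simps)
qed

lemma T2: fixes L :: complex and a b :: real assumes "Im L \<noteq> 0"
  shows "sin (of_real pi * (- (2 * L) + of_real (0/4) + of_real (a/2))) / sin (of_real pi * (- (2*L) + of_real (0/4)))
     * (sin (of_real pi * (- L + of_real (a/4) + of_real (b/2))) / sin (of_real pi * (- L + of_real (a/4))))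
    = cos (of_real pi * (L - of_real (a/4))) / (cos (of_real pi * L) * sin (of_real pi * L)) *
      sin (of_real pi * (L - of_real ((b + a/2)/2)))"
proof -
  define u where "u = of_real pi * (L - of_real (a/4))"
  have c: "cos (of_real pi * L) \<noteq> 0" and s: "sin (of_real pi * L) \<noteq> 0"
    using assms cos_pi_nz sin_pi_nz by auto
  have su: "sin u \<noteq> 0" unfolding u_def using assms by (intro sin_pi_nz) simp
  have e1: "of_real pi * (- (2 * L) + of_real (0/4) + of_real (a/2)) = - (2 * u)"
    unfolding u_def by (simp add: algebra_simps)
  have e2: "of_real pi * (- (2*L) + of_real (0/4)) = - (2 * (of_real pi * L))" by (simp add: algebra_simps)
  have e3: "of_real pi * (- L + of_real (a/4) + of_real (b/2)) = - (of_real pi * (L - of_real ((b + a/2)/2)))"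
    by (simp add: algebra_simps)
  have e4: "of_real pi * (- L + of_real (a/4)) = - u" unfolding u_def by (simp add: algebra_simps)
  have e5: "of_real pi * (L - of_real (a/4)) = u" unfolding u_def ..
  show ?thesis unfolding e1 e2 e3 e4 e5 sin_minus sin_double
    using c s su by (simp add: field_simps)
qed


lemma half_not_int: "(1/2::real) \<notin> \<int>"
proof
  assume "(1/2::real) \<in> \<int>"
  then obtain n::int where "1/2 = real_of_int n" by (auto elim: Ints_cases)
  then have "1 = 2 * real_of_int n" by simp
  then have "(1::int) = 2 * n" by linarith
  then show False by presburger
qed

lemma no_quarter:
  assumes R: "root_system R" and a: "a \<in> R" and a4: "(4::real) *\<^sub>R a \<in> R" shows False
proof -
  have "0 \<notin> R" using R by (simp add: root_system_def)
  with a have "a \<noteq> 0" by auto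
  then have aa: "a \<bullet> a \<noteq> 0" by simp
  have X: "2 * (a \<bullet> ((4::real) *\<^sub>R a)) / (((4::real) *\<^sub>R a) \<bullet> ((4::real) *\<^sub>R a)) \<in> \<int>"
    using R a a4 unfolding root_system_def by blast
  have Y: "2 * (a \<bullet> ((4::real) *\<^sub>R a)) / (((4::real) *\<^sub>R a) \<bullet> ((4::real) *\<^sub>R a)) = 1/2"
    using aa by (simp add: inner_commute)
  from X have "(1/2::real) \<in> \<int>" unfolding Y .
  then show False using half_not_int by blast
qed

lemma pos_neg:
  assumes PS: "positive_system R P S" and R: "root_system R"
    and b: "\<beta> \<in> P" and t: "t < 0" and tb: "t *\<^sub>R \<beta> \<in> P" shows False
proof -
  have indep: "independent S" and PR: "P \<subseteq> R" using PS by (auto simp: positive_system_def)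
  have fin: "finite S" using indep by (rule finiteI_independent)
  obtain k :: "_ \<Rightarrow> nat" where k: "\<beta> = (\<Sum>s\<in>S. real (k s) *\<^sub>R s)"
    using PS b unfolding positive_system_def by blast
  obtain k' :: "_ \<Rightarrow> nat" where k': "t *\<^sub>R \<beta> = (\<Sum>s\<in>S. real (k' s) *\<^sub>R s)"
    using PS tb unfolding positive_system_def by blast
  have "(\<Sum>s\<in>S. (real (k' s) - t * real (k s)) *\<^sub>R s) = (\<Sum>s\<in>S. real (k' s) *\<^sub>R s) - t *\<^sub>R (\<Sum>s\<in>S. real (k s) *\<^sub>R s)"
    by (simp add: scaleR_diff_left sum_subtractf scaleR_sum_right)
  also have "\<dots> = 0" unfolding k'[symmetric] k[symmetric] by simp
  finally have "(\<Sum>s\<in>S. (real (k' s) - t * real (k s)) *\<^sub>R s) = 0" .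
  moreover have nd: "\<not> ((\<exists>v\<in>S. u v \<noteq> 0) \<and> (\<Sum>v\<in>S. u v *\<^sub>R v) = 0)" for u
    using indep dependent_finite[OF fin] by (simp only: not_ex) blast
  ultimately have z: "\<forall>s\<in>S. real (k' s) - t * real (k s) = 0"
    using nd[of "\<lambda>s. real (k' s) - t * real (k s)"] by blast
  have "\<forall>s\<in>S. k s = 0"
  proof
    fix s assume "s \<in> S"
    with z have "real (k' s) = t * real (k s)" by simp
    moreover have "t * real (k s) \<le> 0" using t by (simp add: mult_nonpos_nonneg)
    moreover have "real (k' s) \<ge> 0" by simp
    ultimately have "t * real (k s) = 0" by linarith
    with t show "k s = 0" by simp
  qed
  then have "\<beta> = 0" using k by simp
  moreover have "0 \<notin> R" using R by (simp add: root_system_def)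
  ultimately show False using b PR by auto
qed

lemma scaled_in_P:
  assumes PS: "positive_system R P S" and R: "root_system R"
    and b: "\<beta> \<in> P" and t: "t > 0" and tb: "t *\<^sub>R \<beta> \<in> R" shows "t *\<^sub>R \<beta> \<in> P"
proof (rule ccontr)
  assume "t *\<^sub>R \<beta> \<notin> P"
  with tb PS obtain p where p: "p \<in> P" "t *\<^sub>R \<beta> = - p" unfolding positive_system_def by auto
  then have "(- t) *\<^sub>R \<beta> \<in> P" by simp
  with pos_neg[OF PS R b, of "-t"] t show False by simp
qed


lemma T1': fixes L :: complex and a b :: real assumes "Im L \<noteq> 0" "a = 0"
  shows "sin (of_real pi * (- L + of_real (a/4) + of_real (b/2))) / sin (of_real pi * (- L + of_real (a/4)))
    = cos (of_real pi * (L - of_real (a/4))) / (cos (of_real pi * L) * sin (of_real pi * L)) *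
      sin (of_real pi * (L - of_real ((b + a/2)/2)))"
  using T1[OF assms(1), of "b/2"] assms(2) by simp

theorem mainTheorem5:
  fixes R P S :: "'a::euclidean_space set" and m :: "'a \<Rightarrow> real" and lam :: "'a \<times> 'a"
  assumes "root_system R" and "positive_system R P S" and "multiplicity R m"
    and "\<forall>\<alpha>\<in>R. snd lam \<bullet> \<alpha> \<noteq> 0"
  shows "b_fun R P S m lam =
    (1 / 2 ^ DIM('a)) * cstar_tilde P m (- rho P m, 0) / c_tilde P m (rho P m, 0) *
    (\<Prod>\<beta>\<in>pos_star R P.
        cos (of_real pi * (lcoord lam \<beta> - of_real (m (half \<beta>) / 4))) /
        (cos (of_real pi * lcoord lam \<beta>) * sin (of_real pi * lcoord lam \<beta>))) *
    (\<Prod>\<beta>\<in>pos_star R P - beta_of R ` S.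
        sin (of_real pi * (lcoord lam \<beta> - of_real (rho_tilde m \<beta>))))"
proof -
  note R = assms(1) and PS = assms(2) and M = assms(3) and Y = assms(4)
  have PR: "P \<subseteq> R" and SP: "S \<subseteq> P" and RP: "R = P \<union> uminus ` P" and indep: "independent S"
    using PS unfolding positive_system_def by auto
  have finR: "finite R" and R0: "0 \<notin> R" using R unfolding root_system_def by auto
  have finP: "finite P" using finR PR finite_subset by blast
  have finS: "finite S" using indep by (rule finiteI_independent)
  have m0: "\<And>\<alpha>. \<alpha> \<notin> R \<Longrightarrow> m \<alpha> = 0" using M unfolding multiplicity_def by auto
  define L where "L = lcoord lam"
  have ImL: "Im (L \<alpha>) \<noteq> 0" if "\<alpha> \<in> R" for \<alpha>
  proof -
    have "\<alpha> \<noteq> 0" using that R0 by auto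
    then have "\<alpha> \<bullet> \<alpha> \<noteq> 0" by simp
    then show ?thesis using Y that unfolding L_def Im_lcoord by auto
  qed
  define r where "r \<alpha> = c_alpha m \<alpha> (-lam) / cstar_alpha m \<alpha> (-lam)" for \<alpha>
  have r_eq: "r \<alpha> = sin (of_real pi * (- L \<alpha> + of_real (m (half \<alpha>) / 4) + of_real (m \<alpha> / 2))) /
       sin (of_real pi * (- L \<alpha> + of_real (m (half \<alpha>) / 4)))" if "\<alpha> \<in> R" for \<alpha>
  proof -
    define z where "z = - L \<alpha> + of_real (m (half \<alpha>) / 4)"
    have Iz: "Im z \<noteq> 0" unfolding z_def using ImL[OF that] by simp
    have e1: "1 - - lcoord lam \<alpha> - complex_of_real (m (half \<alpha>) / 4) - complex_of_real (m \<alpha> / 2)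
       = 1 - z - of_real (m \<alpha> / 2)" unfolding z_def L_def by simp
    have e2: "1 - - lcoord lam \<alpha> - complex_of_real (m (half \<alpha>) / 4) = 1 - z" unfolding z_def L_def by simp
    have e3: "- lcoord lam \<alpha> + complex_of_real (m (half \<alpha>) / 4) = z" unfolding z_def L_def by simp
    show ?thesis unfolding r_def c_alpha_def cstar_alpha_def lcoord_neg e1 e2 e3
      using gamma_ratio[OF Iz, of "m \<alpha> / 2"] unfolding z_def by simp
  qed
  define Pst where "Pst = pos_star R P"
  define H where "H = {\<beta>\<in>Pst. half \<beta> \<in> R}"
  have PstP: "Pst \<subseteq> P" unfolding Pst_def pos_star_def by auto
  have finPst: "finite Pst" using finP PstP finite_subset by blast
  have half2: "half ((2::real) *\<^sub>R x) = x" for x :: 'a unfolding half_def by simp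
  have halfinj: "inj_on half H" unfolding inj_on_def half_def by auto
  have HP: "half ` H \<subseteq> P"
  proof
    fix x assume "x \<in> half ` H"
    then obtain \<beta> where b: "\<beta> \<in> H" "x = half \<beta>" by auto
    then have bP: "\<beta> \<in> P" and xR: "x \<in> R" using PstP unfolding H_def by auto
    show "x \<in> P"
    proof (rule ccontr)
      assume "x \<notin> P"
      with xR RP obtain p where p: "p \<in> P" "x = - p" by auto
      then have "(- 1/2::real) *\<^sub>R \<beta> \<in> P" using b unfolding half_def by simp
      from pos_neg[OF PS R bP _ this] show False by simp
    qed
  qed
  have Pdec: "P = Pst \<union> half ` H"
  proof
    show "P \<subseteq> Pst \<union> half ` H"
    proof
      fix \<alpha> assume aP: "\<alpha> \<in> P"
      show "\<alpha> \<in> Pst \<union> half ` H"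
      proof (cases "\<alpha> \<in> Pst")
        case False
        then have a2: "(2::real) *\<^sub>R \<alpha> \<in> R" using aP unfolding Pst_def pos_star_def by auto
        have gP: "(2::real) *\<^sub>R \<alpha> \<in> P" using scaled_in_P[OF PS R aP _ a2] by simp
        have "(2::real) *\<^sub>R ((2::real) *\<^sub>R \<alpha>) \<notin> R"
        proof
          assume "(2::real) *\<^sub>R ((2::real) *\<^sub>R \<alpha>) \<in> R"
          then have "(4::real) *\<^sub>R \<alpha> \<in> R" by simp
          with no_quarter[OF R] aP PR show False by auto
        qed
        with gP have "(2::real) *\<^sub>R \<alpha> \<in> H" unfolding H_def Pst_def pos_star_def using aP PR by (auto simp: half2)
        then have "half ((2::real) *\<^sub>R \<alpha>) \<in> half ` H" by blast
        then show ?thesis unfolding half2 by simp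
      qed simp
    qed
    show "Pst \<union> half ` H \<subseteq> P" using PstP HP by auto
  qed
  have disj: "Pst \<inter> half ` H = {}"
  proof (rule ccontr)
    assume "Pst \<inter> half ` H \<noteq> {}"
    then obtain \<beta> where b: "\<beta> \<in> H" "half \<beta> \<in> Pst" by auto
    then have "(2::real) *\<^sub>R half \<beta> \<notin> R" unfolding Pst_def pos_star_def by auto
    moreover have "(2::real) *\<^sub>R half \<beta> = \<beta>" unfolding half_def by simp
    ultimately show False using b PstP PR unfolding H_def by auto
  qed
  define G where "G \<beta> = cos (of_real pi * (L \<beta> - of_real (m (half \<beta>) / 4))) /
        (cos (of_real pi * L \<beta>) * sin (of_real pi * L \<beta>))" for \<beta>
  define T where "T \<beta> = sin (of_real pi * (L \<beta> - of_real (rho_tilde m \<beta>)))" for \<beta>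
  have Fb: "(if half \<beta> \<in> R then r (half \<beta>) else 1) * r \<beta> = G \<beta> * T \<beta>" if bP: "\<beta> \<in> Pst" for \<beta>
  proof -
    have bR: "\<beta> \<in> R" using bP PstP PR by auto
    show ?thesis
    proof (cases "half \<beta> \<in> R")
      case False
      then have "m (half \<beta>) = 0" by (rule m0)
      then show ?thesis using False T1'[OF ImL[OF bR] \<open>m (half \<beta>) = 0\<close>, of "m \<beta>"]
        unfolding r_eq[OF bR] G_def T_def rho_tilde_def by simp
    next
      case True
      have hh: "half (half \<beta>) \<notin> R"
      proof
        assume "half (half \<beta>) \<in> R"
        moreover have "(4::real) *\<^sub>R half (half \<beta>) = \<beta>" unfolding half_def by simp
        ultimately show False using no_quarter[OF R, of "half (half \<beta>)"] bR by simp
      qed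
      have Lh: "L (half \<beta>) = 2 * L \<beta>" unfolding L_def half_def
        by (subst lcoord_scale) auto
      have "r (half \<beta>) = sin (of_real pi * (- (2 * L \<beta>) + of_real (0/4) + of_real (m (half \<beta>)/2))) /
          sin (of_real pi * (- (2 * L \<beta>) + of_real (0/4)))"
        unfolding r_eq[OF True] Lh m0[OF hh] ..
      moreover have "r \<beta> = sin (of_real pi * (- L \<beta> + of_real (m (half \<beta>)/4) + of_real (m \<beta>/2))) /
          sin (of_real pi * (- L \<beta> + of_real (m (half \<beta>)/4)))"
        by (rule r_eq[OF bR])
      ultimately show ?thesis using True T2[OF ImL[OF bR], of "m (half \<beta>)" "m \<beta>"]
        unfolding G_def T_def rho_tilde_def by simp
    qed
  qed
  have prodP: "(\<Prod>\<alpha>\<in>P. r \<alpha>) = (\<Prod>\<beta>\<in>Pst. G \<beta>) * (\<Prod>\<beta>\<in>Pst. T \<beta>)"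
  proof -
    have "(\<Prod>\<alpha>\<in>P. r \<alpha>) = (\<Prod>\<alpha>\<in>Pst. r \<alpha>) * (\<Prod>\<alpha>\<in>half ` H. r \<alpha>)"
      unfolding Pdec using finPst disj finite_subset[OF HP finP] by (intro prod.union_disjoint) auto
    also have "(\<Prod>\<alpha>\<in>half ` H. r \<alpha>) = (\<Prod>\<beta>\<in>H. r (half \<beta>))"
      using prod.reindex[OF halfinj] by simp
    also have "\<dots> = (\<Prod>\<beta>\<in>Pst. if half \<beta> \<in> R then r (half \<beta>) else 1)"
      unfolding H_def using finPst by (rule prod.inter_filter)
    finally have "(\<Prod>\<alpha>\<in>P. r \<alpha>) = (\<Prod>\<beta>\<in>Pst. (if half \<beta> \<in> R then r (half \<beta>) else 1) * r \<beta>)"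
      by (simp add: prod.distrib mult.commute)
    also have "\<dots> = (\<Prod>\<beta>\<in>Pst. G \<beta> * T \<beta>)" using Fb by (rule prod.cong[OF refl])
    finally show ?thesis by (simp add: prod.distrib)
  qed
  have bS: "beta_of R s \<in> Pst" if sS: "s \<in> S" for s
  proof -
    have sP: "s \<in> P" using sS SP by auto
    show ?thesis
    proof (cases "(2::real) *\<^sub>R s \<in> R")
      case True
      have gP: "(2::real) *\<^sub>R s \<in> P" using scaled_in_P[OF PS R sP _ True] by simp
      have "(2::real) *\<^sub>R ((2::real) *\<^sub>R s) \<notin> R"
      proof
        assume "(2::real) *\<^sub>R ((2::real) *\<^sub>R s) \<in> R"
        then have "(4::real) *\<^sub>R s \<in> R" by simp
        with no_quarter[OF R] sP PR show False by auto
      qed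
      then show ?thesis using gP True unfolding beta_of_def Pst_def pos_star_def by auto
    next
      case False
      then show ?thesis using sP unfolding beta_of_def Pst_def pos_star_def by auto
    qed
  qed
  have binj: "inj_on (beta_of R) S"
  proof (rule inj_onI)
    fix s s' assume s: "s \<in> S" and s': "s' \<in> S" and eq: "beta_of R s = beta_of R s'"
    have nd: "\<not> (a \<in> span (S - {a}))" if "a \<in> S" for a
      using indep that unfolding dependent_def by blast
    have mix: False if "x \<in> S" "y \<in> S" "x \<noteq> y" "(2::real) *\<^sub>R x = y" for x y
    proof -
      have "x \<in> S - {y}" using that by auto
      then have "(2::real) *\<^sub>R x \<in> span (S - {y})" by (intro span_mul span_base)
      with nd[OF that(2)] that(4) show False by simp
    qed
    show "s = s'"
    proof (rule ccontr)
      assume ne: "s \<noteq> s'"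
      show False
        using eq mix[OF s s' ne] mix[OF s' s ne[symmetric]] ne
        unfolding beta_of_def by (auto split: if_splits)
    qed
  qed
  define B where "B = beta_of R ` S"
  have BP: "B \<subseteq> Pst" using bS unfolding B_def by auto
  have TB: "(\<Prod>\<beta>\<in>B. T \<beta>) \<noteq> 0"
  proof -
    have "T \<beta> \<noteq> 0" if "\<beta> \<in> B" for \<beta>
    proof -
      have "\<beta> \<in> R" using that BP PstP PR by auto
      then have "Im (L \<beta> - of_real (rho_tilde m \<beta>)) \<noteq> 0" using ImL by simp
      then show ?thesis unfolding T_def by (rule sin_pi_nz)
    qed
    moreover have "finite B" using finS unfolding B_def by simp
    ultimately show ?thesis by simp
  qed
  have SB: "(\<Prod>s\<in>S. T (beta_of R s)) = (\<Prod>\<beta>\<in>B. T \<beta>)"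
    unfolding B_def using prod.reindex[OF binj, of T] by (simp add: comp_def)
  have split: "(\<Prod>\<beta>\<in>Pst. T \<beta>) = (\<Prod>\<beta>\<in>Pst - B. T \<beta>) * (\<Prod>\<beta>\<in>B. T \<beta>)"
    using prod.subset_diff[OF BP finPst] .
  have cc: "c_fun P m (- lam) / cstar_fun P m (- lam) =
      cstar_tilde P m (- rho P m, 0) / c_tilde P m (rho P m, 0) * (\<Prod>\<alpha>\<in>P. r \<alpha>)"
    unfolding c_fun_def cstar_fun_def c_tilde_def cstar_tilde_def r_def prod_dividef
    by (simp add: field_simps)
  have sS: "(\<Prod>s\<in>S. 1 / sin (of_real pi * (lcoord lam (beta_of R s) - of_real (rho_tilde m (beta_of R s)))))
     = 1 / (\<Prod>\<beta>\<in>B. T \<beta>)"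
  proof -
    have "(\<Prod>s\<in>S. 1 / sin (of_real pi * (lcoord lam (beta_of R s) - of_real (rho_tilde m (beta_of R s)))))
       = (\<Prod>s\<in>S. 1 / T (beta_of R s))" by (simp add: T_def L_def)
    also have "\<dots> = 1 / (\<Prod>s\<in>S. T (beta_of R s))" by (simp add: prod_dividef)
    finally show ?thesis unfolding SB .
  qed
  have "b_fun R P S m lam = (1 / 2 ^ DIM('a)) * (c_fun P m (- lam) / cstar_fun P m (- lam)) *
     (\<Prod>s\<in>S. 1 / sin (of_real pi * (lcoord lam (beta_of R s) - of_real (rho_tilde m (beta_of R s)))))"
    unfolding b_fun_def by simp
  also have "\<dots> = (1 / 2 ^ DIM('a)) * (cstar_tilde P m (- rho P m, 0) / c_tilde P m (rho P m, 0) *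
      ((\<Prod>\<beta>\<in>Pst. G \<beta>) * ((\<Prod>\<beta>\<in>Pst - B. T \<beta>) * (\<Prod>\<beta>\<in>B. T \<beta>)))) * (1 / (\<Prod>\<beta>\<in>B. T \<beta>))"
    unfolding cc sS prodP split ..
  also have "\<dots> = (1 / 2 ^ DIM('a)) * cstar_tilde P m (- rho P m, 0) / c_tilde P m (rho P m, 0) *
      (\<Prod>\<beta>\<in>Pst. G \<beta>) * (\<Prod>\<beta>\<in>Pst - B. T \<beta>)"
    using TB by (simp add: field_simps)
  finally show ?thesis unfolding Pst_def B_def G_def T_def L_def .
qed


end
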